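(* Let $(S,K,I)$ be a balanced split graph with $|I|\ge2$ such that $\Phi(S)$ is complete. If $x$ is an inactive vertex of $S$, then $x$ is universal in $S$.
   Context: All graphs are finite and simple. A split graph is a graph $S$ whose vertex set is a disjoint union $V(S)=K\,\dot\cup\,I$ with $K$ a clique and $I$ an independent set; $(K,I)$ is called a bipartition of $S$, and $(S,K,I)$ denotes $S$ together with this fixed bipartition. A 2-switch in a graph $G$ is performed on four distinct vertices $a,b,c,d$ with $ab,cd\in E(G)$ and $ac,bd\notin E(G)$: it deletes $ab,cd$ and adds $ac,bd$; $a,b,c,d$ are said to participate in it. A vertex is active in $G$ if it participates in some 2-switch on $G$, otherwise inactive. A vertex is universal if it is adjacent to all other vertices. For a split graph $(S,K,I)$ and distinct $u,v\in I$, $\sigma_{uv}(S)$ is the number of induced subgraphs of $S$ isomorphic to $P_4$ containing both $u$ and $v$. The factor graph $\Phi(S)$ is the loopless multigraph with vertex set $I$ having exactly $\sigma_{uv}(S)$ parallel edges between $u$ and $v$. Graph notions (connected, complete, etc.) applied to $\Phi(S)$ refer to its underlying simple graph, in which $u\sim v$ iff $\sigma_{uv}(S)\ge1$. A vertex $w$ of $(S,K,I)$ is swing if $N_S(w)=K\setminus\{w\}$. $(S,K,I)$ is balanced if $|K|=\omega(S)$ and $|I|=\alpha(S)$; it is known that $S$ is balanced iff it has no swing vertex. *)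

theory Defs
  imports Main
begin

definition graph :: "'a set \<Rightarrow> ('a \<Rightarrow> 'a \<Rightarrow> bool) \<Rightarrow> bool" where
  "graph V E \<longleftrightarrow> finite V \<and> (\<forall>x y. E x y \<longrightarrow> E y x) \<and> (\<forall>x. \<not> E x x)
     \<and> (\<forall>x y. E x y \<longrightarrow> x \<in> V \<and> y \<in> V)"

definition is_clique :: "('a \<Rightarrow> 'a \<Rightarrow> bool) \<Rightarrow> 'a set \<Rightarrow> bool" where
  "is_clique E C \<longleftrightarrow> (\<forall>x\<in>C. \<forall>y\<in>C. x \<noteq> y \<longrightarrow> E x y)"

definition is_indep :: "('a \<Rightarrow> 'a \<Rightarrow> bool) \<Rightarrow> 'a set \<Rightarrow> bool" where
  "is_indep E A \<longleftrightarrow> (\<forall>x\<in>A. \<forall>y\<in>A. \<not> E x y)"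

definition clique_number :: "'a set \<Rightarrow> ('a \<Rightarrow> 'a \<Rightarrow> bool) \<Rightarrow> nat" where
  "clique_number V E = Max {card C | C. C \<subseteq> V \<and> is_clique E C}"

definition indep_number :: "'a set \<Rightarrow> ('a \<Rightarrow> 'a \<Rightarrow> bool) \<Rightarrow> nat" where
  "indep_number V E = Max {card A | A. A \<subseteq> V \<and> is_indep E A}"

definition split_graph :: "'a set \<Rightarrow> ('a \<Rightarrow> 'a \<Rightarrow> bool) \<Rightarrow> 'a set \<Rightarrow> 'a set \<Rightarrow> bool" where
  "split_graph V E K I \<longleftrightarrow> graph V E \<and> V = K \<union> I \<and> K \<inter> I = {}
     \<and> is_clique E K \<and> is_indep E I"

definition balanced :: "'a set \<Rightarrow> ('a \<Rightarrow> 'a \<Rightarrow> bool) \<Rightarrow> 'a set \<Rightarrow> 'a set \<Rightarrow> bool" where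
  "balanced V E K I \<longleftrightarrow> card K = clique_number V E \<and> card I = indep_number V E"

definition two_switchable :: "'a set \<Rightarrow> ('a \<Rightarrow> 'a \<Rightarrow> bool) \<Rightarrow> 'a \<Rightarrow> 'a \<Rightarrow> 'a \<Rightarrow> 'a \<Rightarrow> bool" where
  "two_switchable V E a b c d \<longleftrightarrow> a \<in> V \<and> b \<in> V \<and> c \<in> V \<and> d \<in> V
     \<and> distinct [a, b, c, d] \<and> E a b \<and> E c d \<and> \<not> E a c \<and> \<not> E b d"

definition active :: "'a set \<Rightarrow> ('a \<Rightarrow> 'a \<Rightarrow> bool) \<Rightarrow> 'a \<Rightarrow> bool" where
  "active V E x \<longleftrightarrow> (\<exists>a b c d. two_switchable V E a b c d \<and> x \<in> {a, b, c, d})"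

definition universal :: "'a set \<Rightarrow> ('a \<Rightarrow> 'a \<Rightarrow> bool) \<Rightarrow> 'a \<Rightarrow> bool" where
  "universal V E x \<longleftrightarrow> (\<forall>y\<in>V. y \<noteq> x \<longrightarrow> E x y)"

definition induced_P4 :: "'a set \<Rightarrow> ('a \<Rightarrow> 'a \<Rightarrow> bool) \<Rightarrow> 'a set \<Rightarrow> bool" where
  "induced_P4 V E X \<longleftrightarrow> X \<subseteq> V \<and> (\<exists>a b c d. distinct [a, b, c, d] \<and> X = {a, b, c, d}
     \<and> E a b \<and> E b c \<and> E c d \<and> \<not> E a c \<and> \<not> E a d \<and> \<not> E b d)"

definition sigma :: "'a set \<Rightarrow> ('a \<Rightarrow> 'a \<Rightarrow> bool) \<Rightarrow> 'a \<Rightarrow> 'a \<Rightarrow> nat" where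
  "sigma V E u v = card {X. induced_P4 V E X \<and> u \<in> X \<and> v \<in> X}"

text \<open>Underlying simple graph of the factor graph Phi(S) on vertex set I.\<close>
definition factor_adj :: "'a set \<Rightarrow> ('a \<Rightarrow> 'a \<Rightarrow> bool) \<Rightarrow> 'a \<Rightarrow> 'a \<Rightarrow> bool" where
  "factor_adj V E u v \<longleftrightarrow> u \<noteq> v \<and> sigma V E u v \<ge> 1"

definition factor_complete :: "'a set \<Rightarrow> ('a \<Rightarrow> 'a \<Rightarrow> bool) \<Rightarrow> 'a set \<Rightarrow> bool" where
  "factor_complete V E I \<longleftrightarrow> (\<forall>u\<in>I. \<forall>v\<in>I. u \<noteq> v \<longrightarrow> factor_adj V E u v)"

end

theory Submission
  imports Defs
begin

lemma P4_active:
  assumes "induced_P4 V E X" "x \<in> X"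
  shows "active V E x"
proof -
  from assms obtain a b c d where h: "X \<subseteq> V" "distinct [a, b, c, d]" "X = {a, b, c, d}"
    "E a b" "E b c" "E c d" "\<not> E a c" "\<not> E a d" "\<not> E b d"
    unfolding induced_P4_def by blast
  have "two_switchable V E a b c d" using h unfolding two_switchable_def by auto
  then show ?thesis unfolding active_def using h assms(2) by blast
qed

lemma P4_shape:
  assumes sg: "split_graph V E K I" and p: "induced_P4 V E X"
  shows "\<exists>a b c d. X = {a,b,c,d} \<and> a \<in> I \<and> d \<in> I \<and> b \<in> K \<and> c \<in> K
     \<and> E a b \<and> E c d \<and> \<not> E a c \<and> \<not> E b d"
proof -
  from p obtain a b c d where h: "X \<subseteq> V" "distinct [a, b, c, d]" "X = {a, b, c, d}"
    "E a b" "E b c" "E c d" "\<not> E a c" "\<not> E a d" "\<not> E b d"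
    unfolding induced_P4_def by blast
  have V: "V = K \<union> I" and cl: "is_clique E K" and ind: "is_indep E I"
    using sg unfolding split_graph_def by auto
  have abcd: "a \<in> V" "b \<in> V" "c \<in> V" "d \<in> V" using h by auto
  have KI: "\<And>z. z \<in> V \<Longrightarrow> (z \<in> K) = (z \<notin> I)" using V sg unfolding split_graph_def by auto
  have nI: "\<And>p q. E p q \<Longrightarrow> \<not> (p \<in> I \<and> q \<in> I)" using ind unfolding is_indep_def by blast
  have nK: "\<And>p q. \<not> E p q \<Longrightarrow> p \<noteq> q \<Longrightarrow> \<not> (p \<in> K \<and> q \<in> K)" using cl unfolding is_clique_def by blast
  have 1: "\<not> (a \<in> I \<and> b \<in> I)" "\<not> (b \<in> I \<and> c \<in> I)" "\<not> (c \<in> I \<and> d \<in> I)"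
    using nI h by auto
  have 2: "\<not> (a \<in> K \<and> c \<in> K)" "\<not> (a \<in> K \<and> d \<in> K)" "\<not> (b \<in> K \<and> d \<in> K)"
    using nK h by auto
  have 3: "(a \<in> K) = (a \<notin> I)" "(b \<in> K) = (b \<notin> I)" "(c \<in> K) = (c \<notin> I)" "(d \<in> K) = (d \<notin> I)"
    using KI abcd by auto
  have "a \<in> I \<and> d \<in> I \<and> b \<in> K \<and> c \<in> K"
    using 1 2 3 by blast
  then show ?thesis using h by blast
qed

theorem lemma4p1:
  fixes V :: "'a set" and E :: "'a \<Rightarrow> 'a \<Rightarrow> bool" and K I :: "'a set" and x :: 'a
  assumes "split_graph V E K I"
    and "balanced V E K I"
    and "card I \<ge> 2"
    and "factor_complete V E I"
    and "x \<in> V"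
    and "\<not> active V E x"
  shows "universal V E x"
proof -
  note sg = assms(1)
  have V: "V = K \<union> I" and cl: "is_clique E K" and ind: "is_indep E I"
    and disj: "K \<inter> I = {}" and gr: "graph V E"
    using sg unfolding split_graph_def by auto
  have fin: "finite V" and sym: "\<And>p q. E p q \<Longrightarrow> E q p" using gr unfolding graph_def by auto
  have finI: "finite I" using fin V by auto
  have P4: "\<exists>X. induced_P4 V E X \<and> u \<in> X \<and> v \<in> X" if "u \<in> I" "v \<in> I" "u \<noteq> v" for u v
  proof -
    have "sigma V E u v \<ge> 1" using assms(4) that unfolding factor_complete_def factor_adj_def by auto
    then have "{X. induced_P4 V E X \<and> u \<in> X \<and> v \<in> X} \<noteq> {}" unfolding sigma_def
      by (metis card.empty not_one_le_zero)
    then show ?thesis by blast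
  qed
  show ?thesis
  proof (cases "x \<in> I")
    case True
    have "\<exists>v\<in>I. v \<noteq> x"
    proof (rule ccontr)
      assume "\<not> ?thesis"
      then have "I \<subseteq> {x}" by auto
      then have "card I \<le> 1" using card_mono[of "{x}" I] by auto
      then show False using assms(3) by auto
    qed
    then obtain v where "v \<in> I" "v \<noteq> x" by blast
    then obtain X where "induced_P4 V E X" "x \<in> X" using P4[of x v] True by blast
    then have "active V E x" by (rule P4_active)
    then show ?thesis using assms(6) by blast
  next
    case False
    then have xK: "x \<in> K" using assms(5) V by blast
    show ?thesis unfolding universal_def
    proof (intro ballI impI)
      fix u assume u: "u \<in> V" "u \<noteq> x"
      show "E x u"
      proof (cases "u \<in> K")
        case True then show ?thesis using cl xK u unfolding is_clique_def by auto
      next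
        case False
        then have uI: "u \<in> I" using u V by auto
        show ?thesis
        proof (rule ccontr)
          assume nxu: "\<not> E x u"
          show False
          proof (cases "\<exists>w\<in>I. E x w")
            case True
            then obtain w where w: "w \<in> I" "E x w" by blast
            have wu: "w \<noteq> u" using w nxu by auto
            obtain X where X: "induced_P4 V E X" "u \<in> X" "w \<in> X" using P4[OF uI w(1) wu[symmetric]] by blast
            obtain a b c d where s: "X = {a,b,c,d}" "a \<in> I" "d \<in> I" "b \<in> K" "c \<in> K"
              "E a b" "E c d" "\<not> E a c" "\<not> E b d"
              using P4_shape[OF sg X(1)] by blast
            have KI: "\<And>z. z \<in> K \<Longrightarrow> z \<notin> I" using disj by auto
            have "u \<noteq> b" "u \<noteq> c" "w \<noteq> b" "w \<noteq> c" using KI s uI w(1) by blast+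
            then have "(u = a \<and> w = d) \<or> (u = d \<and> w = a)"
              using X(2,3) s(1) wu by blast
            then obtain y where y: "y \<in> K" "E u y" "\<not> E w y"
            proof
              assume "u = a \<and> w = d" then show ?thesis using that[of b] s sym by blast
            next
              assume "u = d \<and> w = a" then show ?thesis using that[of c] s sym by blast
            qed
            have yV: "y \<in> V" "w \<in> V" using y w V by auto
            have "x \<noteq> y" using y nxu sym by blast
            moreover have "x \<noteq> w" "x \<noteq> u" "w \<noteq> y" "u \<noteq> y" using xK w(1) uI y(1) KI by blast+
            ultimately have "two_switchable V E x w u y"
              unfolding two_switchable_def using yV u assms(5) w y nxu wu by auto
            then have "active V E x" unfolding active_def by blast
            then show False using assms(6) by blast
          next
            case False
            have nxx: "\<not> E x x" using gr unfolding graph_def by blast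
            have "is_indep E (insert x I)" using False ind nxx sym unfolding is_indep_def
              by blast
            moreover have "insert x I \<subseteq> V" using V xK by auto
            ultimately have "card (insert x I) \<in> {card A | A. A \<subseteq> V \<and> is_indep E A}" by blast
            moreover have "finite {card A | A. A \<subseteq> V \<and> is_indep E A}"
            proof -
              have "{card A | A. A \<subseteq> V \<and> is_indep E A} \<subseteq> card ` Pow V" by auto
              then show ?thesis using fin finite_subset by blast
            qed
            ultimately have "card (insert x I) \<le> indep_number V E"
              unfolding indep_number_def by auto
            moreover have "card (insert x I) = card I + 1" using finI xK disj by (simp add: disjoint_iff)
            moreover have "card I = indep_number V E" using assms(2) unfolding balanced_def by auto
            ultimately show False by auto
          qed
        qed
      qed
    qed
  qed
qed

end
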